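(* Suppose Assumptions 1 and 2 hold, let $J_0\in B(\mathbb{S}_+^n(\gamma))$ be a constant function, and let $J_k=T^kJ_0$, $\bar J_k=\bar T^kJ_0$, $\hat J_k=\hat T^kJ_0$. Then for every $k=0,1,2,\dots$ and every $P\in\mathbb{S}_+^n(\gamma)$, $J_k(P)\le\bar J_k(P)\le\hat J_k(P)$.
   Context: Fix positive integers $n,m$. Let $A\in\mathbb{R}^{n\times n}$ be Schur stable (every eigenvalue has modulus $<1$), $W\in\mathbb{R}^{n\times n}$ symmetric positive definite, $C\in\mathbb{R}^{m\times n}$ (the $i$-th row corresponds to sensor $i$), and $V\in\mathbb{R}^{m\times m}$ symmetric positive definite. For $S\subseteq\{1,\dots,m\}$, $C_S$ is the submatrix of $C$ formed by the rows indexed by $S$ and $V_S$ the principal submatrix of $V$ with rows and columns indexed by $S$ (with $C_S^\top V_S^{-1}C_S:=0$ when $S=\emptyset$). For $P\succeq 0$ define $f(P,S)=\big((APA^\top+W)^{-1}+C_S^\top V_S^{-1}C_S\big)^{-1}$. Let $g:2^{\{1,\dots,m\}}\to[0,\infty)$ and $c(P,S)=\mathrm{Tr}(P)+g(S)$. Fix a discount factor $0\le\beta<1$ and $\gamma>0$. Let $\mathbb{S}_+^n$ be the $n\times n$ positive semidefinite matrices and $\mathbb{S}_+^n(\gamma)=\{P\in\mathbb{S}_+^n:\mathrm{Tr}(P)\le\gamma\}$. $B(\mathbb{S}_+^n(\gamma))$ is the set of functions $J:\mathbb{S}_+^n(\gamma)\to\mathbb{R}$ with $\|J\|_\infty:=\sup_{P\in\mathbb{S}_+^n(\gamma)}|J(P)|<\infty$.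 Convention: every $J\in B(\mathbb{S}_+^n(\gamma))$ is evaluated as $J(Q)=+\infty$ for $Q\succeq0$ with $\mathrm{Tr}(Q)>\gamma$; minima over $S$ range over all $S\subseteq\{1,\dots,m\}$. Fix a resolution $\epsilon>0$. Let $\mathbb{M}=\{\epsilon P: P\in\mathbb{Z}^{n\times n}\text{ symmetric},\,P\succeq0\}$ and $\mathbb{M}(\gamma)=\{\hat P\in\mathbb{M}:\mathrm{Tr}(\hat P)\le\gamma\}$. Define $\Theta(P)=\epsilon\,\mathrm{round}(P/\epsilon)+\epsilon nI$ (entrywise rounding to the nearest integer) and $\Omega(P)=P+2\epsilon nI$. Operators: $(TJ)(P)=\min_S\{c(P,S)+\beta J(f(P,S))\}$, $(\bar TJ)(P)=\min_S\{c(P,S)+\beta J(\Theta(f(P,S)))\}$, $(\hat TJ)(P)=\min_S\{c(P,S)+\beta J(\Omega(f(P,S)))\}$ for $P\in\mathbb{S}_+^n(\gamma)$. Assumption 1: there exists $\pi:\mathbb{S}_+^n(\gamma)\to2^{\{1,\dots,m\}}$ with $f(P,\pi(P))\in\mathbb{S}_+^n(\gamma)$ for all $P\in\mathbb{S}_+^n(\gamma)$. Assumption 2: for each $P\in\mathbb{S}_+^n(\gamma)$ there exists $S\subseteq\{1,\dots,m\}$ with $\Omega(f(P,S))\in\mathbb{M}(\gamma)$. *)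

theory Defs
  imports "Jordan_Normal_Form.Char_Poly" "Jordan_Normal_Form.DL_Submatrix"
          "HOL-Library.Extended_Real"
begin

(* Matrices are JNF matrices (type real mat) with explicit carriers.
   Sensors are indexed 0..m-1 (row i of C is sensor i). *)

definition mtr :: "real mat \<Rightarrow> real" where
  "mtr P = (\<Sum>i<dim_row P. P $$ (i,i))"

definition psd :: "nat \<Rightarrow> real mat \<Rightarrow> bool" where
  "psd n P \<longleftrightarrow> P \<in> carrier_mat n n \<and> transpose_mat P = P \<and>
     (\<forall>x\<in>carrier_vec n. 0 \<le> x \<bullet> (P *\<^sub>v x))"

definition pd :: "nat \<Rightarrow> real mat \<Rightarrow> bool" where
  "pd n P \<longleftrightarrow> P \<in> carrier_mat n n \<and> transpose_mat P = P \<and>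
     (\<forall>x\<in>carrier_vec n. x \<noteq> 0\<^sub>v n \<longrightarrow> 0 < x \<bullet> (P *\<^sub>v x))"

definition schur_stable :: "nat \<Rightarrow> real mat \<Rightarrow> bool" where
  "schur_stable n A \<longleftrightarrow> A \<in> carrier_mat n n \<and>
     (\<forall>z::complex. eigenvalue (map_mat complex_of_real A) z \<longrightarrow> cmod z < 1)"

definition minv :: "real mat \<Rightarrow> real mat" where
  "minv A = (SOME B. B \<in> carrier_mat (dim_row A) (dim_row A) \<and>
                     A * B = 1\<^sub>m (dim_row A) \<and> B * A = 1\<^sub>m (dim_row A))"

definition info :: "real mat \<Rightarrow> real mat \<Rightarrow> nat set \<Rightarrow> real mat" where
  "info C V S = (if S = {} then 0\<^sub>m (dim_col C) (dim_col C)
     else transpose_mat (submatrix C S UNIV) * minv (submatrix V S S) * submatrix C S UNIV)"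

definition kf :: "real mat \<Rightarrow> real mat \<Rightarrow> real mat \<Rightarrow> real mat \<Rightarrow> nat set \<Rightarrow> real mat \<Rightarrow> real mat" where
  "kf A W C V S P = minv (minv (A * P * transpose_mat A + W) + info C V S)"

definition Sg :: "nat \<Rightarrow> real \<Rightarrow> real mat set" where
  "Sg n \<gamma> = {P. psd n P \<and> mtr P \<le> \<gamma>}"

definition Mg :: "nat \<Rightarrow> real \<Rightarrow> real \<Rightarrow> real mat set" where
  "Mg n \<epsilon> \<gamma> = {Q. (\<exists>Z::int mat. Z \<in> carrier_mat n n \<and> transpose_mat Z = Z \<and>
        psd n (map_mat real_of_int Z) \<and> Q = \<epsilon> \<cdot>\<^sub>m map_mat real_of_int Z) \<and> mtr Q \<le> \<gamma>}"

definition Theta :: "nat \<Rightarrow> real \<Rightarrow> real mat \<Rightarrow> real mat" where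
  "Theta n \<epsilon> P = \<epsilon> \<cdot>\<^sub>m map_mat (\<lambda>x. real_of_int (round (x / \<epsilon>))) P + (\<epsilon> * real n) \<cdot>\<^sub>m 1\<^sub>m n"

definition Omega :: "nat \<Rightarrow> real \<Rightarrow> real mat \<Rightarrow> real mat" where
  "Omega n \<epsilon> P = P + (2 * \<epsilon> * real n) \<cdot>\<^sub>m 1\<^sub>m n"

definition extJ :: "nat \<Rightarrow> real \<Rightarrow> (real mat \<Rightarrow> ereal) \<Rightarrow> real mat \<Rightarrow> ereal" where
  "extJ n \<gamma> J Q = (if Q \<in> Sg n \<gamma> then J Q else \<infinity>)"

definition bellman :: "nat \<Rightarrow> nat \<Rightarrow> real \<Rightarrow> real \<Rightarrow> (nat set \<Rightarrow> real)
     \<Rightarrow> (nat set \<Rightarrow> real mat \<Rightarrow> real mat) \<Rightarrow> (real mat \<Rightarrow> ereal) \<Rightarrow> real mat \<Rightarrow> ereal" where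
  "bellman n m \<gamma> \<beta> g F J P =
     Min ((\<lambda>S. ereal (mtr P + g S) + ereal \<beta> * extJ n \<gamma> J (F S P)) ` Pow {..<m})"

end

theory Submission
  imports Defs
begin



lemma qf_sum:
  fixes M :: "real mat"
  assumes M: "M \<in> carrier_mat n n" and x: "x \<in> carrier_vec n"
  shows "x \<bullet> (M *\<^sub>v x) = (\<Sum>i<n. \<Sum>j<n. x$i * M$$(i,j) * x$j)"
proof -
  have "x \<bullet> (M *\<^sub>v x) = (\<Sum>i<n. x$i * (row M i \<bullet> x))"
    using M x by (auto simp: scalar_prod_def atLeast0LessThan)
  also have "\<dots> = (\<Sum>i<n. \<Sum>j<n. x$i * M$$(i,j) * x$j)"
    using M x by (auto simp: scalar_prod_def atLeast0LessThan sum_distrib_left mult.assoc intro!: sum.cong)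
  finally show ?thesis .
qed

lemma pd_det: assumes "pd n A" shows "det A \<noteq> 0"
proof
  assume d: "det A = 0"
  have A: "A \<in> carrier_mat n n" using assms pd_def by auto
  from d[unfolded det_0_iff_vec_prod_zero_field[OF A]]
  obtain v where v: "v \<in> carrier_vec n" "v \<noteq> 0\<^sub>v n" "A *\<^sub>v v = 0\<^sub>v n" by auto
  then have "0 < v \<bullet> (A *\<^sub>v v)" using assms unfolding pd_def by auto
  with v show False by simp
qed

lemma pd_minv:
  assumes "pd n A"
  shows "minv A \<in> carrier_mat n n" "A * minv A = 1\<^sub>m n" "minv A * A = 1\<^sub>m n"
proof -
  have A: "A \<in> carrier_mat n n" using assms pd_def by auto
  from det_non_zero_imp_unit[OF A pd_det[OF assms], unfolded Units_def, of "()"]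
  obtain B where B: "B \<in> carrier_mat n n" "B * A = 1\<^sub>m n" "A * B = 1\<^sub>m n"
    by (auto simp: ring_mat_def)
  have "minv A \<in> carrier_mat n n \<and> A * minv A = 1\<^sub>m n \<and> minv A * A = 1\<^sub>m n"
    unfolding minv_def using A apply simp
    by (rule someI[of _ B]) (use B in auto)
  then show "minv A \<in> carrier_mat n n" "A * minv A = 1\<^sub>m n" "minv A * A = 1\<^sub>m n" by auto
qed

lemma pd_minv_sym:
  assumes "pd n A" shows "transpose_mat (minv A) = minv A"
proof -
  let ?B = "minv A"
  have A: "A \<in> carrier_mat n n" "A\<^sup>T = A" using assms pd_def by auto
  note B = pd_minv[OF assms]
  have BtA: "?B\<^sup>T * A = 1\<^sub>m n"
    using transpose_mult[OF A(1) B(1)] B(2) A(2) by simp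
  have "?B\<^sup>T = ?B\<^sup>T * (A * ?B)" using B by simp
  also have "\<dots> = (?B\<^sup>T * A) * ?B" using A B by (simp add: assoc_mult_mat[symmetric])
  also have "\<dots> = ?B" using BtA B by simp
  finally show ?thesis .
qed

lemma pd_minv_pd:
  assumes "pd n A" shows "pd n (minv A)"
proof -
  let ?B = "minv A"
  have A: "A \<in> carrier_mat n n" "A\<^sup>T = A" using assms pd_def by auto
  note B = pd_minv[OF assms]
  show ?thesis unfolding pd_def
  proof (intro conjI ballI impI)
    show "?B \<in> carrier_mat n n" "?B\<^sup>T = ?B" using B pd_minv_sym[OF assms] by auto
    fix x :: "real vec" assume x: "x \<in> carrier_vec n" "x \<noteq> 0\<^sub>v n"
    define y where "y = ?B *\<^sub>v x"
    have y: "y \<in> carrier_vec n" using B x y_def by auto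
    have Ay: "A *\<^sub>v y = x" unfolding y_def
      using assoc_mult_mat_vec[OF A(1) B(1) x(1), symmetric] B x by simp
    have "y \<noteq> 0\<^sub>v n" using Ay x A by auto
    then have "0 < y \<bullet> (A *\<^sub>v y)" using assms y unfolding pd_def by auto
    also have "y \<bullet> (A *\<^sub>v y) = (A\<^sup>T *\<^sub>v y) \<bullet> y"
      using transpose_vec_mult_scalar[OF A(1) y y] by simp
    also have "\<dots> = x \<bullet> (?B *\<^sub>v x)" using A Ay y_def by simp
    finally show "0 < x \<bullet> (?B *\<^sub>v x)" by simp
  qed
qed


lemma psd_pd_mono:
  fixes A B :: "real mat"
  assumes A: "pd n A" and B: "pd n B" and BA: "psd n (B - A)"
  shows "psd n (minv A - minv B)"
proof -
  have Ac: "A \<in> carrier_mat n n" "A\<^sup>T = A" using A pd_def by auto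
  have Bc: "B \<in> carrier_mat n n" "B\<^sup>T = B" using B pd_def by auto
  note Ai = pd_minv[OF A] and Bi = pd_minv[OF B]
  show ?thesis unfolding psd_def
  proof (intro conjI ballI)
    show "minv A - minv B \<in> carrier_mat n n" using Ai Bi by auto
    show "(minv A - minv B)\<^sup>T = minv A - minv B"
      using transpose_minus[OF Ai(1) Bi(1)] pd_minv_sym[OF A] pd_minv_sym[OF B] by simp
    fix x :: "real vec" assume x: "x \<in> carrier_vec n"
    define u where "u = minv A *\<^sub>v x"
    define y where "y = minv B *\<^sub>v x"
    have u: "u \<in> carrier_vec n" and y: "y \<in> carrier_vec n" using Ai Bi x u_def y_def by auto
    have Au: "A *\<^sub>v u = x" unfolding u_def
      using assoc_mult_mat_vec[OF Ac(1) Ai(1) x, symmetric] Ai x by simp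
    have By: "B *\<^sub>v y = x" unfolding y_def
      using assoc_mult_mat_vec[OF Bc(1) Bi(1) x, symmetric] Bi x by simp
    have symA: "\<And>v w. v \<in> carrier_vec n \<Longrightarrow> w \<in> carrier_vec n \<Longrightarrow> v \<bullet> (A *\<^sub>v w) = w \<bullet> (A *\<^sub>v v)"
    proof -
      fix v w :: "real vec" assume v: "v \<in> carrier_vec n" and w: "w \<in> carrier_vec n"
      have "v \<bullet> (A *\<^sub>v w) = (A\<^sup>T *\<^sub>v v) \<bullet> w" using transpose_vec_mult_scalar[OF Ac(1) w v] by simp
      also have "\<dots> = w \<bullet> (A *\<^sub>v v)" using Ac v w by (simp add: comm_scalar_prod[of _ n])
      finally show "v \<bullet> (A *\<^sub>v w) = w \<bullet> (A *\<^sub>v v)" .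
    qed
    have "0 \<le> (y - u) \<bullet> (A *\<^sub>v (y - u))"
      using A y u unfolding pd_def by (cases "y - u = 0\<^sub>v n") (auto simp: less_imp_le)
    also have "(y - u) \<bullet> (A *\<^sub>v (y - u)) = y \<bullet> (A *\<^sub>v y) - y \<bullet> (A *\<^sub>v u) - u \<bullet> (A *\<^sub>v y) + u \<bullet> (A *\<^sub>v u)"
      using Ac y u by (simp add: mult_minus_distrib_mat_vec minus_scalar_prod_distrib scalar_prod_minus_distrib[of _ n])
    also have "u \<bullet> (A *\<^sub>v y) = y \<bullet> x" using symA[OF u y] Au by simp
    finally have 1: "0 \<le> y \<bullet> (A *\<^sub>v y) - 2 * (y \<bullet> x) + u \<bullet> x"
      using Au y u x by (simp add: comm_scalar_prod[of u n x])
    have "0 \<le> y \<bullet> ((B - A) *\<^sub>v y)" using BA y unfolding psd_def by auto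
    also have "\<dots> = y \<bullet> x - y \<bullet> (A *\<^sub>v y)"
      using Ac Bc y By x by (simp add: minus_mult_distrib_mat_vec scalar_prod_minus_distrib[of _ n])
    finally have 2: "0 \<le> y \<bullet> x - y \<bullet> (A *\<^sub>v y)" .
    have "x \<bullet> ((minv A - minv B) *\<^sub>v x) = x \<bullet> u - x \<bullet> y"
      using Ai Bi x u_def y_def by (simp add: minus_mult_distrib_mat_vec scalar_prod_minus_distrib[of _ n])
    also have "\<dots> = u \<bullet> x - y \<bullet> x" using x u y by (simp add: comm_scalar_prod[of _ n])
    finally show "0 \<le> x \<bullet> ((minv A - minv B) *\<^sub>v x)" using 1 2 by linarith
  qed
qed

lemma psd_congr:
  fixes M B :: "real mat"
  assumes M: "psd n M" and B: "B \<in> carrier_mat k n"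
  shows "psd k (B * M * B\<^sup>T)"
proof -
  have Mc: "M \<in> carrier_mat n n" "M\<^sup>T = M" using M psd_def by auto
  show ?thesis unfolding psd_def
  proof (intro conjI ballI)
    show "B * M * B\<^sup>T \<in> carrier_mat k k" using B Mc by auto
    show "(B * M * B\<^sup>T)\<^sup>T = B * M * B\<^sup>T"
      proof -
      have "(B * M * B\<^sup>T)\<^sup>T = (B\<^sup>T)\<^sup>T * (B * M)\<^sup>T"
        using transpose_mult[OF mult_carrier_mat[OF B Mc(1)] transpose_carrier_mat[THEN iffD2, OF B]] .
      also have "\<dots> = B * (M * B\<^sup>T)" by (simp only: transpose_transpose transpose_mult[OF B Mc(1)] Mc(2))
      also have "\<dots> = B * M * B\<^sup>T" by (rule assoc_mult_mat[OF B Mc(1) transpose_carrier_mat[THEN iffD2, OF B], symmetric])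
      finally show ?thesis .
    qed
    fix x :: "real vec" assume x: "x \<in> carrier_vec k"
    have "x \<bullet> (B * M * B\<^sup>T *\<^sub>v x) = x \<bullet> (B *\<^sub>v (M *\<^sub>v (B\<^sup>T *\<^sub>v x)))"
      proof -
      have BT: "B\<^sup>T \<in> carrier_mat n k" by (rule transpose_carrier_mat[THEN iffD2, OF B])
      have BTx: "B\<^sup>T *\<^sub>v x \<in> carrier_vec n" by (rule mult_mat_vec_carrier[OF BT x])
      have "B * M * B\<^sup>T *\<^sub>v x = (B * M) *\<^sub>v (B\<^sup>T *\<^sub>v x)"
        by (rule assoc_mult_mat_vec[OF mult_carrier_mat[OF B Mc(1)] BT x])
      also have "\<dots> = B *\<^sub>v (M *\<^sub>v (B\<^sup>T *\<^sub>v x))"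
        by (rule assoc_mult_mat_vec[OF B Mc(1) BTx])
      finally show ?thesis by simp
    qed
    also have "\<dots> = (B\<^sup>T *\<^sub>v x) \<bullet> (M *\<^sub>v (B\<^sup>T *\<^sub>v x))"
      using transpose_vec_mult_scalar[OF B _ x, of "M *\<^sub>v (B\<^sup>T *\<^sub>v x)"] B Mc x by simp
    also have "\<dots> \<ge> 0" using M B x unfolding psd_def by auto
    finally show "0 \<le> x \<bullet> (B * M * B\<^sup>T *\<^sub>v x)" .
  qed
qed

lemma pd_congr:
  fixes M B :: "real mat"
  assumes M: "pd n M" and B: "B \<in> carrier_mat k n"
    and inj: "\<And>x. x \<in> carrier_vec k \<Longrightarrow> B\<^sup>T *\<^sub>v x = 0\<^sub>v n \<Longrightarrow> x = 0\<^sub>v k"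
  shows "pd k (B * M * B\<^sup>T)"
proof -
  have Mc: "M \<in> carrier_mat n n" "M\<^sup>T = M" using M pd_def by auto
  show ?thesis unfolding pd_def
  proof (intro conjI ballI impI)
    show "B * M * B\<^sup>T \<in> carrier_mat k k" using B Mc by auto
    show "(B * M * B\<^sup>T)\<^sup>T = B * M * B\<^sup>T"
      proof -
      have "(B * M * B\<^sup>T)\<^sup>T = (B\<^sup>T)\<^sup>T * (B * M)\<^sup>T"
        using transpose_mult[OF mult_carrier_mat[OF B Mc(1)] transpose_carrier_mat[THEN iffD2, OF B]] .
      also have "\<dots> = B * (M * B\<^sup>T)" by (simp only: transpose_transpose transpose_mult[OF B Mc(1)] Mc(2))
      also have "\<dots> = B * M * B\<^sup>T" by (rule assoc_mult_mat[OF B Mc(1) transpose_carrier_mat[THEN iffD2, OF B], symmetric])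
      finally show ?thesis .
    qed
    fix x :: "real vec" assume x: "x \<in> carrier_vec k" and x0: "x \<noteq> 0\<^sub>v k"
    have "x \<bullet> (B * M * B\<^sup>T *\<^sub>v x) = x \<bullet> (B *\<^sub>v (M *\<^sub>v (B\<^sup>T *\<^sub>v x)))"
      proof -
      have BT: "B\<^sup>T \<in> carrier_mat n k" by (rule transpose_carrier_mat[THEN iffD2, OF B])
      have BTx: "B\<^sup>T *\<^sub>v x \<in> carrier_vec n" by (rule mult_mat_vec_carrier[OF BT x])
      have "B * M * B\<^sup>T *\<^sub>v x = (B * M) *\<^sub>v (B\<^sup>T *\<^sub>v x)"
        by (rule assoc_mult_mat_vec[OF mult_carrier_mat[OF B Mc(1)] BT x])
      also have "\<dots> = B *\<^sub>v (M *\<^sub>v (B\<^sup>T *\<^sub>v x))"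
        by (rule assoc_mult_mat_vec[OF B Mc(1) BTx])
      finally show ?thesis by simp
    qed
    also have "\<dots> = (B\<^sup>T *\<^sub>v x) \<bullet> (M *\<^sub>v (B\<^sup>T *\<^sub>v x))"
      using transpose_vec_mult_scalar[OF B _ x, of "M *\<^sub>v (B\<^sup>T *\<^sub>v x)"] B Mc x by simp
    also have "\<dots> > 0"
    proof -
      have h1: "B\<^sup>T *\<^sub>v x \<in> carrier_vec n" by (rule mult_mat_vec_carrier[OF transpose_carrier_mat[THEN iffD2, OF B] x])
      have h2: "B\<^sup>T *\<^sub>v x \<noteq> 0\<^sub>v n" using inj[OF x] x0 by auto
      have pos: "\<forall>v\<in>carrier_vec n. v \<noteq> 0\<^sub>v n \<longrightarrow> 0 < v \<bullet> (M *\<^sub>v v)" using M by (simp add: pd_def)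
      show ?thesis by (rule pos[rule_format, OF h1 h2])
    qed
    finally show "0 < x \<bullet> (B * M * B\<^sup>T *\<^sub>v x)" .
  qed
qed

lemma psd_add: assumes A: "psd n A" and B: "psd n B" shows "psd n (A + B)"
  unfolding psd_def
proof (intro conjI ballI)
  have Ac: "A \<in> carrier_mat n n" "A\<^sup>T = A" and Bc: "B \<in> carrier_mat n n" "B\<^sup>T = B"
    using A B psd_def by auto
  show "A + B \<in> carrier_mat n n" using Ac Bc by simp
  show "(A + B)\<^sup>T = A + B" using transpose_add[OF Ac(1) Bc(1)] Ac Bc by simp
  fix x :: "real vec" assume x: "x \<in> carrier_vec n"
  have "x \<bullet> ((A + B) *\<^sub>v x) = x \<bullet> (A *\<^sub>v x) + x \<bullet> (B *\<^sub>v x)"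
    using add_mult_distrib_mat_vec[OF Ac(1) Bc(1) x] scalar_prod_add_distrib[of x n "A *\<^sub>v x" "B *\<^sub>v x"] x Ac Bc
    by simp
  moreover have "0 \<le> x \<bullet> (A *\<^sub>v x)" "0 \<le> x \<bullet> (B *\<^sub>v x)" using A B x psd_def by auto
  ultimately show "0 \<le> x \<bullet> ((A + B) *\<^sub>v x)" by simp
qed

lemma pd_psd: assumes "pd n A" shows "psd n A"
  unfolding psd_def
proof (intro conjI ballI)
  show "A \<in> carrier_mat n n" "A\<^sup>T = A" using assms pd_def by auto
  fix x :: "real vec" assume x: "x \<in> carrier_vec n"
  show "0 \<le> x \<bullet> (A *\<^sub>v x)"
  proof (cases "x = 0\<^sub>v n")
    case True then show ?thesis using \<open>A \<in> carrier_mat n n\<close> by simp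
  next
    case False then show ?thesis using assms x pd_def by (auto intro: less_imp_le)
  qed
qed

lemma pd_add: assumes A: "pd n A" and B: "psd n B" shows "pd n (A + B)"
  unfolding pd_def
proof (intro conjI ballI impI)
  have Ac: "A \<in> carrier_mat n n" "A\<^sup>T = A" and Bc: "B \<in> carrier_mat n n" "B\<^sup>T = B"
    using A B psd_def pd_def by auto
  show "A + B \<in> carrier_mat n n" using Ac Bc by simp
  show "(A + B)\<^sup>T = A + B" using transpose_add[OF Ac(1) Bc(1)] Ac Bc by simp
  fix x :: "real vec" assume x: "x \<in> carrier_vec n" "x \<noteq> 0\<^sub>v n"
  have "x \<bullet> ((A + B) *\<^sub>v x) = x \<bullet> (A *\<^sub>v x) + x \<bullet> (B *\<^sub>v x)"
    using add_mult_distrib_mat_vec[OF Ac(1) Bc(1) x(1)] scalar_prod_add_distrib[of x n "A *\<^sub>v x" "B *\<^sub>v x"] x Ac Bc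
    by simp
  moreover have "0 < x \<bullet> (A *\<^sub>v x)" "0 \<le> x \<bullet> (B *\<^sub>v x)" using A B x psd_def pd_def by auto
  ultimately show "0 < x \<bullet> ((A + B) *\<^sub>v x)" by simp
qed



lemma term_bound:
  fixes a b e d c :: real
  assumes "\<bar>e\<bar> \<le> c"
  shows "a * (dd + e) * b \<ge> a * dd * b - c * (a^2 + b^2) / 2"
proof -
  have "\<bar>a * e * b\<bar> = \<bar>e\<bar> * (\<bar>a\<bar> * \<bar>b\<bar>)" by (simp add: abs_mult)
  also have "\<dots> \<le> c * (\<bar>a\<bar> * \<bar>b\<bar>)" using mult_right_mono[OF assms, of "\<bar>a\<bar> * \<bar>b\<bar>"] by simp
  also have "\<bar>a\<bar> * \<bar>b\<bar> \<le> (a^2 + b^2) / 2"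
    using sum_squares_bound[of "\<bar>a\<bar>" "\<bar>b\<bar>"] by (simp add: power2_eq_square abs_mult_self_eq) 
  then have "c * (\<bar>a\<bar> * \<bar>b\<bar>) \<le> c * ((a^2 + b^2) / 2)"
    using assms by (intro mult_left_mono) auto
  finally have h: "\<bar>a * e * b\<bar> \<le> c * ((a^2 + b^2) / 2)" .
  have "a * (dd + e) * b = a * dd * b + a * e * b" by (simp add: algebra_simps)
  then show ?thesis using h abs_ge_minus_self[of "a * e * b"] by simp
qed

lemma dd_psd:
  fixes M :: "real mat"
  assumes M: "M \<in> carrier_mat n n" "M\<^sup>T = M"
    and bnd: "\<And>i j. i < n \<Longrightarrow> j < n \<Longrightarrow> \<bar>M$$(i,j) - (if i = j then d else 0)\<bar> \<le> c"
    and cd: "c * real n \<le> d"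
  shows "psd n M"
  unfolding psd_def
proof (intro conjI ballI)
  show "M \<in> carrier_mat n n" "M\<^sup>T = M" using M by auto
  fix x :: "real vec" assume x: "x \<in> carrier_vec n"
  let ?s = "\<Sum>i<n. (x$i)^2"
  have "(\<Sum>i<n. \<Sum>j<n. x$i * (if i = j then d else 0) * x$j - c * ((x$i)^2 + (x$j)^2) / 2)
        \<le> (\<Sum>i<n. \<Sum>j<n. x$i * M$$(i,j) * x$j)"
  proof (intro sum_mono)
    fix i j assume "i \<in> {..<n}" "j \<in> {..<n}"
    then have "\<bar>M$$(i,j) - (if i = j then d else 0)\<bar> \<le> c" using bnd by auto
    from term_bound[OF this, of "x$i" "if i = j then d else 0" "x$j"]
    show "x$i * (if i = j then d else 0) * x$j - c * ((x$i)^2 + (x$j)^2) / 2 \<le> x$i * M$$(i,j) * x$j"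
      by simp
  qed
  also have "(\<Sum>i<n. \<Sum>j<n. x$i * (if i = j then d else 0) * x$j - c * ((x$i)^2 + (x$j)^2) / 2)
      = d * ?s - c * real n * ?s"
  proof -
    have 1: "(\<Sum>i<n. \<Sum>j<n. x$i * (if i = j then d else 0) * x$j) = d * ?s"
    proof -
      have "(\<Sum>i<n. \<Sum>j<n. x$i * (if i = j then d else 0) * x$j) = (\<Sum>i<n. \<Sum>j<n. if i = j then d * (x$i)^2 else 0)"
        by (intro sum.cong refl) (auto simp: power2_eq_square)
      also have "\<dots> = (\<Sum>i<n. d * (x$i)^2)" by simp
      finally show ?thesis by (simp add: sum_distrib_left)
    qed
    have 2: "(\<Sum>i<n. \<Sum>j<n. c * ((x$i)^2 + (x$j)^2) / 2) = c * real n * ?s"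
    proof -
      have eq: "\<And>i j. c * ((x$i)^2 + (x$j)^2) / 2 = c / 2 * (x$i)^2 + c / 2 * (x$j)^2"
        by (simp add: field_simps)
      have "(\<Sum>i<n. \<Sum>j<n. c * ((x$i)^2 + (x$j)^2) / 2)
          = (\<Sum>i<n. \<Sum>j<n. c / 2 * (x$i)^2) + (\<Sum>i<n. \<Sum>j<n. c / 2 * (x$j)^2)"
        by (simp only: eq sum.distrib)
      also have "(\<Sum>i<n. \<Sum>j<n. c / 2 * (x$i)^2) = real n * (c / 2) * ?s"
        by (simp add: sum_distrib_left mult.assoc)
      also have "(\<Sum>i<n. \<Sum>j<n. c / 2 * (x$j)^2) = real n * (c / 2) * ?s"
        by (simp add: sum_distrib_left mult.assoc)
      finally show ?thesis by simp
    qed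
    show ?thesis using 1 2 by (simp add: sum_subtractf)
  qed
  finally have "d * ?s - c * real n * ?s \<le> x \<bullet> (M *\<^sub>v x)" using qf_sum[OF M(1) x] by simp
  moreover have "0 \<le> d * ?s - c * real n * ?s"
  proof -
    have "0 \<le> ?s" by (simp add: sum_nonneg)
    then have "c * real n * ?s \<le> d * ?s" using cd by (simp add: mult_right_mono)
    then show ?thesis by simp
  qed
  ultimately show "0 \<le> x \<bullet> (M *\<^sub>v x)" by linarith
qed


lemma add_minus_cancel_mat:
  fixes A B :: "real mat"
  assumes "A \<in> carrier_mat n n" "B \<in> carrier_mat n n"
  shows "A + (B - A) = B"
  using assms by (intro eq_matI) auto

lemma minus_split_mat:
  fixes A B C :: "real mat"
  assumes "A \<in> carrier_mat n n" "B \<in> carrier_mat n n" "C \<in> carrier_mat n n"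
  shows "C - A = (C - B) + (B - A)"
  using assms by (intro eq_matI) auto

lemma sym_entry: "X \<in> carrier_mat n n \<Longrightarrow> X\<^sup>T = X \<Longrightarrow> i < n \<Longrightarrow> j < n \<Longrightarrow> X $$ (j, i) = X $$ (i, j)"
  by (metis index_transpose_mat(1) carrier_matD)

lemma theta_carrier: "Theta n \<epsilon> X \<in> carrier_mat n n"
  unfolding Theta_def by auto

lemma omega_carrier: "X \<in> carrier_mat n n \<Longrightarrow> Omega n \<epsilon> X \<in> carrier_mat n n"
  unfolding Omega_def by auto

lemma round_err: assumes "0 < \<epsilon>"
  shows "\<bar>\<epsilon> * real_of_int (round (x / \<epsilon>)) - x\<bar> \<le> \<epsilon> / 2"
proof -
  have "\<epsilon> * real_of_int (round (x / \<epsilon>)) - x = \<epsilon> * (real_of_int (round (x / \<epsilon>)) - x / \<epsilon>)"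
    using assms by (simp add: field_simps)
  then have "\<bar>\<epsilon> * real_of_int (round (x / \<epsilon>)) - x\<bar> = \<epsilon> * \<bar>real_of_int (round (x / \<epsilon>)) - x / \<epsilon>\<bar>"
    using assms by (simp add: abs_mult)
  also have "\<dots> \<le> \<epsilon> * (1/2)" using of_int_round_abs_le[of "x / \<epsilon>"] assms
    by (intro mult_left_mono) auto
  finally show ?thesis by simp
qed

lemma theta_minus_psd:
  fixes X :: "real mat"
  assumes X: "X \<in> carrier_mat n n" "X\<^sup>T = X" and e: "0 < \<epsilon>"
  shows "psd n (Theta n \<epsilon> X - X)"
proof (rule dd_psd[where d = "\<epsilon> * real n" and c = "\<epsilon> / 2"])
  show "Theta n \<epsilon> X - X \<in> carrier_mat n n" using X theta_carrier by auto
  show "(Theta n \<epsilon> X - X)\<^sup>T = Theta n \<epsilon> X - X"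
    using X by (intro eq_matI) (auto simp: Theta_def sym_entry[OF X])
  fix i j assume ij: "i < n" "j < n"
  have "(Theta n \<epsilon> X - X) $$ (i,j) - (if i = j then \<epsilon> * real n else 0)
      = \<epsilon> * real_of_int (round (X$$(i,j) / \<epsilon>)) - X$$(i,j)"
    using X ij by (simp add: Theta_def)
  then show "\<bar>(Theta n \<epsilon> X - X) $$ (i,j) - (if i = j then \<epsilon> * real n else 0)\<bar> \<le> \<epsilon> / 2"
    using round_err[OF e] by simp
qed (use e in simp)

lemma omega_minus_theta_psd:
  fixes X :: "real mat"
  assumes X: "X \<in> carrier_mat n n" "X\<^sup>T = X" and e: "0 < \<epsilon>"
  shows "psd n (Omega n \<epsilon> X - Theta n \<epsilon> X)"
proof (rule dd_psd[where d = "\<epsilon> * real n" and c = "\<epsilon> / 2"])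
  show "Omega n \<epsilon> X - Theta n \<epsilon> X \<in> carrier_mat n n" by (rule minus_carrier_mat[OF theta_carrier])
  show "(Omega n \<epsilon> X - Theta n \<epsilon> X)\<^sup>T = Omega n \<epsilon> X - Theta n \<epsilon> X"
    using X by (intro eq_matI) (auto simp: Theta_def Omega_def sym_entry[OF X])
  fix i j assume ij: "i < n" "j < n"
  have "(Omega n \<epsilon> X - Theta n \<epsilon> X) $$ (i,j) - (if i = j then \<epsilon> * real n else 0)
      = - (\<epsilon> * real_of_int (round (X$$(i,j) / \<epsilon>)) - X$$(i,j))"
    using X ij by (simp add: Theta_def Omega_def)
  then show "\<bar>(Omega n \<epsilon> X - Theta n \<epsilon> X) $$ (i,j) - (if i = j then \<epsilon> * real n else 0)\<bar> \<le> \<epsilon> / 2"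
    using round_err[OF e, of "X$$(i,j)"] by (simp add: abs_minus_commute)
qed (use e in simp)



lemma pick_inj:
  assumes "i < card S" "j < card S" "pick S i = pick S j" shows "i = j"
  using pick_mono[of j S i] pick_mono[of i S j] assms by (cases i j rule: linorder_cases) auto

lemma pick_lt:
  assumes "S \<subseteq> {..<m}" "i < card S" shows "pick S i < m"
  using pick_in_set[of i S] assms by auto

lemma card_S: "S \<subseteq> {..<m} \<Longrightarrow> {i. i < m \<and> i \<in> S} = S" by auto

lemma sub_eq:
  fixes V :: "real mat"
  assumes V: "V \<in> carrier_mat m m" and S: "S \<subseteq> {..<m}"
  defines "R \<equiv> mat (card S) m (\<lambda>(i,k). if k = pick S i then 1 else 0) :: real mat"
  shows "submatrix V S S = R * V * R\<^sup>T"
proof (rule eq_matI)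
  have d: "dim_row (submatrix V S S) = card S" "dim_col (submatrix V S S) = card S"
    using V card_S[OF S] by (auto simp: dim_submatrix)
  show "dim_row (submatrix V S S) = dim_row (R * V * R\<^sup>T)" "dim_col (submatrix V S S) = dim_col (R * V * R\<^sup>T)"
    using d R_def by auto
  fix i j assume ij: "i < dim_row (R * V * R\<^sup>T)" "j < dim_col (R * V * R\<^sup>T)"
  then have i: "i < card S" and j: "j < card S" using R_def by auto
  have pi: "pick S i < m" and pj: "pick S j < m" using pick_lt[OF S] i j by auto
  have "submatrix V S S $$ (i,j) = V $$ (pick S i, pick S j)"
    using submatrix_index[of i V S j S] V card_S[OF S] i j by auto
  moreover have "(R * V * R\<^sup>T) $$ (i,j) = V $$ (pick S i, pick S j)"
  proof -
    have "(R * V * R\<^sup>T) $$ (i,j) = (\<Sum>l<m. (\<Sum>k<m. (if k = pick S i then 1 else 0) * V $$ (k, l)) * (if l = pick S j then 1 else 0))"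
      using V i j R_def by (simp add: scalar_prod_def atLeast0LessThan)
    also have "\<dots> = V $$ (pick S i, pick S j)"
      using pi pj by (simp add: if_distrib[of "\<lambda>x. x * _"] if_distrib[of "\<lambda>x. _ * x"] cong: if_cong)
    finally show ?thesis .
  qed
  ultimately show "submatrix V S S $$ (i,j) = (R * V * R\<^sup>T) $$ (i,j)" by simp
qed


lemma psd_zero: "psd n (0\<^sub>m n n :: real mat)"
  unfolding psd_def
proof (intro conjI ballI)
  fix x :: "real vec" assume x: "x \<in> carrier_vec n"
  show "0 \<le> x \<bullet> (0\<^sub>m n n *\<^sub>v x)" using qf_sum[OF zero_carrier_mat x] by simp
qed auto

lemma sub_pd:
  fixes V :: "real mat"
  assumes V: "pd m V" and S: "S \<subseteq> {..<m}"
  shows "pd (card S) (submatrix V S S)"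
proof -
  have Vc: "V \<in> carrier_mat m m" using V pd_def by auto
  define R where "R = (mat (card S) m (\<lambda>(i,k). if k = pick S i then 1 else 0) :: real mat)"
  have eq: "submatrix V S S = R * V * R\<^sup>T" using sub_eq[OF Vc S] R_def by simp
  have Rc: "R \<in> carrier_mat (card S) m" using R_def by simp
  show ?thesis unfolding eq
  proof (rule pd_congr[OF V Rc])
    fix x :: "real vec" assume x: "x \<in> carrier_vec (card S)" and z: "R\<^sup>T *\<^sub>v x = 0\<^sub>v m"
    show "x = 0\<^sub>v (card S)"
    proof (rule eq_vecI)
      show "dim_vec x = dim_vec (0\<^sub>v (card S))" using x by simp
      fix i assume "i < dim_vec (0\<^sub>v (card S) :: real vec)"
      then have i: "i < card S" by simp
      have p: "pick S i < m" using pick_lt[OF S i] .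
      have "(R\<^sup>T *\<^sub>v x) $ pick S i = (\<Sum>j<card S. (if pick S i = pick S j then 1 else 0) * x $ j)"
        using p x R_def by (simp add: scalar_prod_def atLeast0LessThan)
      also have "\<dots> = (\<Sum>j<card S. if j = i then x $ j else 0)"
        by (intro sum.cong refl) (use pick_inj[of i S] i in auto)
      also have "\<dots> = x $ i" using i by simp
      finally show "x $ i = 0\<^sub>v (card S) $ i" using z p i by simp
    qed
  qed
qed

lemma info_psd:
  fixes C V :: "real mat"
  assumes C: "C \<in> carrier_mat m n" and V: "pd m V" and S: "S \<subseteq> {..<m}"
  shows "psd n (info C V S)"
proof (cases "S = {}")
  case True
  have "psd n (0\<^sub>m n n :: real mat)" by (rule psd_zero)
  then show ?thesis using True C by (simp add: info_def)
next
  case False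
  have Vc: "V \<in> carrier_mat m m" using V pd_def by auto
  define D where "D = submatrix C S UNIV"
  have Dc: "D \<in> carrier_mat (card S) n"
    using C card_S[OF S] unfolding D_def carrier_mat_def by (auto simp: dim_submatrix)
  have K: "psd (card S) (minv (submatrix V S S))" using pd_psd[OF pd_minv_pd[OF sub_pd[OF V S]]] .
  have "psd n (D\<^sup>T * minv (submatrix V S S) * D\<^sup>T\<^sup>T)"
    by (rule psd_congr[OF K transpose_carrier_mat[THEN iffD2, OF Dc]])
  then show ?thesis using False by (simp add: info_def D_def)
qed


lemma pd_add2: assumes "psd n A" "pd n B" shows "pd n (A + B)"
proof -
  have "A + B = B + A" using assms psd_def pd_def by (auto intro!: comm_add_mat)
  then show ?thesis using pd_add[OF assms(2,1)] by simp
qed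

lemma addcancel_mat:
  fixes X Y Z :: "real mat"
  assumes "X \<in> carrier_mat n n" "Y \<in> carrier_mat n n" "Z \<in> carrier_mat n n"
  shows "(X + Z) - (Y + Z) = X - Y"
  using assms by (intro eq_matI) auto

lemma kf_pd:
  fixes A W C V P :: "real mat"
  assumes A: "A \<in> carrier_mat n n" and W: "pd n W" and C: "C \<in> carrier_mat m n"
    and V: "pd m V" and S: "S \<subseteq> {..<m}" and P: "psd n P"
  shows "pd n (kf A W C V S P)"
proof -
  have M: "pd n (A * P * A\<^sup>T + W)" by (rule pd_add2[OF psd_congr[OF P A] W])
  have N: "pd n (minv (A * P * A\<^sup>T + W) + info C V S)"
    by (rule pd_add[OF pd_minv_pd[OF M] info_psd[OF C V S]])
  show ?thesis unfolding kf_def by (rule pd_minv_pd[OF N])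
qed

lemma kf_mono:
  fixes A W C V P Q :: "real mat"
  assumes A: "A \<in> carrier_mat n n" and W: "pd n W" and C: "C \<in> carrier_mat m n"
    and V: "pd m V" and S: "S \<subseteq> {..<m}" and P: "psd n P" and Q: "psd n Q"
    and PQ: "psd n (Q - P)"
  shows "psd n (kf A W C V S Q - kf A W C V S P)"
proof -
  have Pc: "P \<in> carrier_mat n n" and Qc: "Q \<in> carrier_mat n n" using P Q psd_def by auto
  have Wc: "W \<in> carrier_mat n n" using W pd_def by auto
  have AT: "A\<^sup>T \<in> carrier_mat n n" using A by simp
  let ?MP = "A * P * A\<^sup>T + W" and ?MQ = "A * Q * A\<^sup>T + W"
  have MP: "pd n ?MP" by (rule pd_add2[OF psd_congr[OF P A] W])
  have MQ: "pd n ?MQ" by (rule pd_add2[OF psd_congr[OF Q A] W])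
  have "?MQ - ?MP = A * Q * A\<^sup>T - A * P * A\<^sup>T"
    by (rule addcancel_mat[OF _ _ Wc]) (use A Pc Qc in auto)
  also have "\<dots> = (A * Q - A * P) * A\<^sup>T"
    by (rule minus_mult_distrib_mat[symmetric]) (use A Pc Qc in auto)
  also have "A * Q - A * P = A * (Q - P)"
    by (rule mult_minus_distrib_mat[symmetric]) (use A Pc Qc in auto)
  finally have "?MQ - ?MP = A * (Q - P) * A\<^sup>T" .
  then have MPQ: "psd n (?MQ - ?MP)" using psd_congr[OF PQ A] by simp
  have I: "psd n (info C V S)" by (rule info_psd[OF C V S])
  have Ic: "info C V S \<in> carrier_mat n n" using I psd_def by auto
  let ?NP = "minv ?MP + info C V S" and ?NQ = "minv ?MQ + info C V S"
  have NP: "pd n ?NP" by (rule pd_add[OF pd_minv_pd[OF MP] I])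
  have NQ: "pd n ?NQ" by (rule pd_add[OF pd_minv_pd[OF MQ] I])
  have "?NP - ?NQ = minv ?MP - minv ?MQ"
    by (rule addcancel_mat[OF pd_minv(1)[OF MP] pd_minv(1)[OF MQ] Ic])
  then have "psd n (?NP - ?NQ)" using psd_pd_mono[OF MP MQ MPQ] by simp
  from psd_pd_mono[OF NQ NP this] show ?thesis unfolding kf_def .
qed


lemma psd_diag:
  fixes M :: "real mat"
  assumes M: "psd n M" and i: "i < n"
  shows "0 \<le> M $$ (i,i)"
proof -
  have Mc: "M \<in> carrier_mat n n" using M psd_def by auto
  have u: "unit_vec n i \<in> carrier_vec n" by simp
  have "unit_vec n i \<bullet> (M *\<^sub>v unit_vec n i) = (M *\<^sub>v unit_vec n i) $ i"
    by (rule scalar_prod_left_unit[OF mult_mat_vec_carrier[OF Mc u] i])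
  also have "\<dots> = row M i \<bullet> unit_vec n i" using Mc i by simp
  also have "\<dots> = M $$ (i,i)" using Mc i by (simp add: scalar_prod_right_unit)
  finally show ?thesis using M u unfolding psd_def by metis
qed

lemma mtr_carrier: "M \<in> carrier_mat n n \<Longrightarrow> mtr M = (\<Sum>i<n. M $$ (i,i))"
  unfolding mtr_def by simp

lemma psd_mtr_le:
  fixes P Q :: "real mat"
  assumes P: "P \<in> carrier_mat n n" and Q: "Q \<in> carrier_mat n n" and PQ: "psd n (Q - P)"
  shows "mtr P \<le> mtr Q"
proof -
  have "(\<Sum>i<n. P $$ (i,i)) \<le> (\<Sum>i<n. Q $$ (i,i))"
  proof (rule sum_mono)
    fix i assume "i \<in> {..<n}"
    then have i: "i < n" by simp
    have "0 \<le> (Q - P) $$ (i,i)" by (rule psd_diag[OF PQ i])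
    then show "P $$ (i,i) \<le> Q $$ (i,i)" using P Q i by simp
  qed
  then show ?thesis using P Q by (simp add: mtr_carrier)
qed

lemma sg_le:
  assumes X: "psd n X" and XY: "psd n (Y - X)" and Y: "Y \<in> Sg n \<gamma>"
  shows "X \<in> Sg n \<gamma>"
proof -
  have Yc: "Y \<in> carrier_mat n n" using Y by (simp add: Sg_def psd_def)
  have Xc: "X \<in> carrier_mat n n" using X by (simp add: psd_def)
  show ?thesis using psd_mtr_le[OF Xc Yc XY] X Y by (simp add: Sg_def)
qed

lemma omega_diff:
  fixes X Y :: "real mat"
  assumes "X \<in> carrier_mat n n" "Y \<in> carrier_mat n n"
  shows "Omega n \<epsilon> Y - Omega n \<epsilon> X = Y - X"
  using assms by (intro eq_matI) (auto simp: Omega_def)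

lemma bellman_step:
  fixes F1 F2 :: "nat set \<Rightarrow> real mat \<Rightarrow> real mat" and J1 J2 :: "real mat \<Rightarrow> ereal"
  assumes b: "0 \<le> \<beta>"
    and H: "\<And>P Q. P \<in> Sg n \<gamma> \<Longrightarrow> Q \<in> Sg n \<gamma> \<Longrightarrow> psd n (Q - P) \<Longrightarrow> J1 P \<le> J2 Q"
    and K: "\<And>S P Q. S \<subseteq> {..<m} \<Longrightarrow> P \<in> Sg n \<gamma> \<Longrightarrow> Q \<in> Sg n \<gamma> \<Longrightarrow> psd n (Q - P)
               \<Longrightarrow> F2 S Q \<in> Sg n \<gamma> \<Longrightarrow> F1 S P \<in> Sg n \<gamma> \<and> psd n (F2 S Q - F1 S P)"
    and P: "P \<in> Sg n \<gamma>" and Q: "Q \<in> Sg n \<gamma>" and PQ: "psd n (Q - P)"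
  shows "bellman n m \<gamma> \<beta> g F1 J1 P \<le> bellman n m \<gamma> \<beta> g F2 J2 Q"
proof -
  let ?X = "Pow {..<m} :: nat set set"
  define a where "a = (\<lambda>S. ereal (mtr P + g S) + ereal \<beta> * extJ n \<gamma> J1 (F1 S P))"
  define bb where "bb = (\<lambda>S. ereal (mtr Q + g S) + ereal \<beta> * extJ n \<gamma> J2 (F2 S Q))"
  have fin: "finite (bb ` ?X)" "bb ` ?X \<noteq> {}" "finite (a ` ?X)" by auto
  obtain S0 where S0: "S0 \<in> ?X" "Min (bb ` ?X) = bb S0"
    using Min_in[OF fin(1,2)] by auto
  have tr: "mtr P \<le> mtr Q"
    using P Q PQ psd_mtr_le[of P n Q] by (simp add: Sg_def psd_def)
  have ext: "extJ n \<gamma> J1 (F1 S0 P) \<le> extJ n \<gamma> J2 (F2 S0 Q)"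
  proof (cases "F2 S0 Q \<in> Sg n \<gamma>")
    case True
    with K[of S0 P Q] S0 P Q PQ have "F1 S0 P \<in> Sg n \<gamma>" "psd n (F2 S0 Q - F1 S0 P)" by auto
    then show ?thesis using H True by (simp add: extJ_def)
  qed (simp add: extJ_def)
  have "a S0 \<le> bb S0" unfolding a_def bb_def
    by (intro add_mono ereal_mult_left_mono ext) (use tr b in auto)
  moreover have "Min (a ` ?X) \<le> a S0" using S0 fin by auto
  ultimately have "Min (a ` ?X) \<le> Min (bb ` ?X)" using S0(2) by (metis order_trans)
  then show ?thesis unfolding bellman_def a_def bb_def .
qed


context
  fixes n m :: nat and A W C V :: "real mat" and \<gamma> \<epsilon> :: real
  assumes A: "A \<in> carrier_mat n n" and W: "pd n W" and C: "C \<in> carrier_mat m n"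
    and V: "pd m V" and e: "0 < \<epsilon>"
begin

lemma K1:
  assumes S: "S \<subseteq> {..<m}" and P: "P \<in> Sg n \<gamma>" and Q: "Q \<in> Sg n \<gamma>" and PQ: "psd n (Q - P)"
    and T: "Theta n \<epsilon> (kf A W C V S Q) \<in> Sg n \<gamma>"
  shows "kf A W C V S P \<in> Sg n \<gamma> \<and> psd n (Theta n \<epsilon> (kf A W C V S Q) - kf A W C V S P)"
proof -
  have Pp: "psd n P" and Qp: "psd n Q" using P Q by (auto simp: Sg_def)
  let ?X = "kf A W C V S P" and ?Y = "kf A W C V S Q"
  have X: "pd n ?X" by (rule kf_pd[OF A W C V S Pp])
  have Y: "pd n ?Y" by (rule kf_pd[OF A W C V S Qp])
  have Xc: "?X \<in> carrier_mat n n" and Yc: "?Y \<in> carrier_mat n n" "?Y\<^sup>T = ?Y"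
    using X Y by (auto simp: pd_def)
  have d1: "psd n (Theta n \<epsilon> ?Y - ?Y)" by (rule theta_minus_psd[OF Yc e])
  have d2: "psd n (?Y - ?X)" by (rule kf_mono[OF A W C V S Pp Qp PQ])
  have "Theta n \<epsilon> ?Y - ?X = (Theta n \<epsilon> ?Y - ?Y) + (?Y - ?X)"
    by (rule minus_split_mat[OF Xc Yc(1) theta_carrier])
  then have d: "psd n (Theta n \<epsilon> ?Y - ?X)" using psd_add[OF d1 d2] by simp
  show ?thesis using sg_le[OF pd_psd[OF X] d T] d by simp
qed

lemma K2:
  assumes S: "S \<subseteq> {..<m}" and P: "P \<in> Sg n \<gamma>" and Q: "Q \<in> Sg n \<gamma>" and PQ: "psd n (Q - P)"
    and T: "Omega n \<epsilon> (kf A W C V S Q) \<in> Sg n \<gamma>"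
  shows "Theta n \<epsilon> (kf A W C V S P) \<in> Sg n \<gamma> \<and> psd n (Omega n \<epsilon> (kf A W C V S Q) - Theta n \<epsilon> (kf A W C V S P))"
proof -
  have Pp: "psd n P" and Qp: "psd n Q" using P Q by (auto simp: Sg_def)
  let ?X = "kf A W C V S P" and ?Y = "kf A W C V S Q"
  have X: "pd n ?X" by (rule kf_pd[OF A W C V S Pp])
  have Y: "pd n ?Y" by (rule kf_pd[OF A W C V S Qp])
  have Xc: "?X \<in> carrier_mat n n" "?X\<^sup>T = ?X" and Yc: "?Y \<in> carrier_mat n n"
    using X Y by (auto simp: pd_def)
  have d1: "psd n (Omega n \<epsilon> ?X - Theta n \<epsilon> ?X)" by (rule omega_minus_theta_psd[OF Xc e])
  have d2: "psd n (?Y - ?X)" by (rule kf_mono[OF A W C V S Pp Qp PQ])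
  have "Omega n \<epsilon> ?Y - Theta n \<epsilon> ?X = (Omega n \<epsilon> ?Y - Omega n \<epsilon> ?X) + (Omega n \<epsilon> ?X - Theta n \<epsilon> ?X)"
    by (rule minus_split_mat[OF theta_carrier omega_carrier[OF Xc(1)] omega_carrier[OF Yc]])
  also have "Omega n \<epsilon> ?Y - Omega n \<epsilon> ?X = ?Y - ?X" by (rule omega_diff[OF Xc(1) Yc])
  finally have d: "psd n (Omega n \<epsilon> ?Y - Theta n \<epsilon> ?X)" using psd_add[OF d2 d1] by simp
  have "Theta n \<epsilon> ?X = ?X + (Theta n \<epsilon> ?X - ?X)"
    by (rule add_minus_cancel_mat[OF Xc(1) theta_carrier, symmetric])
  then have Tp: "psd n (Theta n \<epsilon> ?X)"
    using psd_add[OF pd_psd[OF X] theta_minus_psd[OF Xc e]] by simp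
  show ?thesis using sg_le[OF Tp d T] d by simp
qed

end

theorem proposition3:
  fixes n m :: nat and A W C V :: "real mat" and g :: "nat set \<Rightarrow> real"
    and \<beta> \<gamma> \<epsilon> c0 :: real and k :: nat and P :: "real mat"
  assumes "0 < n" "0 < m"
    and "schur_stable n A"
    and "W \<in> carrier_mat n n" "pd n W"
    and "C \<in> carrier_mat m n"
    and "V \<in> carrier_mat m m" "pd m V"
    and "\<forall>S. 0 \<le> g S"
    and "0 \<le> \<beta>" "\<beta> < 1" "0 < \<gamma>" "0 < \<epsilon>"
    and assumption1: "\<exists>\<pi>. \<forall>Q\<in>Sg n \<gamma>. \<pi> Q \<subseteq> {..<m} \<and> kf A W C V (\<pi> Q) Q \<in> Sg n \<gamma>"
    and assumption2: "\<forall>Q\<in>Sg n \<gamma>. \<exists>S\<subseteq>{..<m}. Omega n \<epsilon> (kf A W C V S Q) \<in> Mg n \<epsilon> \<gamma>"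
    and "P \<in> Sg n \<gamma>"
  shows "((bellman n m \<gamma> \<beta> g (\<lambda>S Q. kf A W C V S Q)) ^^ k) (\<lambda>_. ereal c0) P
           \<le> ((bellman n m \<gamma> \<beta> g (\<lambda>S Q. Theta n \<epsilon> (kf A W C V S Q))) ^^ k) (\<lambda>_. ereal c0) P
       \<and> ((bellman n m \<gamma> \<beta> g (\<lambda>S Q. Theta n \<epsilon> (kf A W C V S Q))) ^^ k) (\<lambda>_. ereal c0) P
           \<le> ((bellman n m \<gamma> \<beta> g (\<lambda>S Q. Omega n \<epsilon> (kf A W C V S Q))) ^^ k) (\<lambda>_. ereal c0) P"
  proof -
  have Ac: "A \<in> carrier_mat n n" using assms(3) by (simp add: schur_stable_def)
  let ?T1 = "bellman n m \<gamma> \<beta> g (\<lambda>S Q. kf A W C V S Q)"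
  let ?T2 = "bellman n m \<gamma> \<beta> g (\<lambda>S Q. Theta n \<epsilon> (kf A W C V S Q))"
  let ?T3 = "bellman n m \<gamma> \<beta> g (\<lambda>S Q. Omega n \<epsilon> (kf A W C V S Q))"
  let ?J0 = "(\<lambda>_. ereal c0) :: real mat \<Rightarrow> ereal"
  have main: "\<forall>P Q. P \<in> Sg n \<gamma> \<longrightarrow> Q \<in> Sg n \<gamma> \<longrightarrow> psd n (Q - P) \<longrightarrow>
     (?T1 ^^ k) ?J0 P \<le> (?T2 ^^ k) ?J0 Q \<and> (?T2 ^^ k) ?J0 P \<le> (?T3 ^^ k) ?J0 Q"
  proof (induction k)
    case 0
    then show ?case by simp
  next
    case (Suc k)
    show ?case
    proof (intro allI impI conjI)
      fix P Q assume P: "P \<in> Sg n \<gamma>" and Q: "Q \<in> Sg n \<gamma>" and PQ: "psd n (Q - P)"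
      show "(?T1 ^^ Suc k) ?J0 P \<le> (?T2 ^^ Suc k) ?J0 Q"
        unfolding funpow.simps comp_def
        by (rule bellman_step[OF assms(10) _ _ P Q PQ])
           (use Suc.IH in blast, use K1[OF Ac assms(5) assms(6) assms(8) assms(13)] in blast)
      show "(?T2 ^^ Suc k) ?J0 P \<le> (?T3 ^^ Suc k) ?J0 Q"
        unfolding funpow.simps comp_def
        by (rule bellman_step[OF assms(10) _ _ P Q PQ])
           (use Suc.IH in blast, use K2[OF Ac assms(5) assms(6) assms(8) assms(13)] in blast)
    qed
  qed
  have Pc: "P \<in> carrier_mat n n" using assms(16) by (simp add: Sg_def psd_def)
  have "P - P = 0\<^sub>m n n" using Pc by (intro eq_matI) auto
  then have "psd n (P - P)" using psd_zero by simp
  then show ?thesis using main assms(16) by blast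
qed

end
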